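(* Let $\rho$ be a bi-invariant pseudometric on $\mathrm{Ham}(M,\Omega)$ and let $A\subset M$ be a nonempty open subset. Then for all $\phi,\psi\in\mathrm{Ham}(M,\Omega)$ with $\operatorname{supp}\phi\subset A$ and $\operatorname{supp}\psi\subset A$, $$e(A)\ \ge\ \tfrac14\,\rho(\mathrm{id},[\phi,\psi]),\qquad [\phi,\psi]:=\psi^{-1}\phi^{-1}\psi\phi .$$
   Context: $(M,\Omega)$ is a connected symplectic manifold without boundary and $\mathrm{Ham}(M,\Omega)$ is its group of (compactly supported) Hamiltonian diffeomorphisms, i.e. time-one maps of flows of time-dependent normalized Hamiltonians. A bi-invariant pseudometric is a function $\rho$ on $\mathrm{Ham}\times\mathrm{Ham}$ which is nonnegative, symmetric, vanishes on the diagonal, satisfies the triangle inequality, and satisfies $\rho(\phi,\psi)=\rho(\phi\theta,\psi\theta)=\rho(\theta\phi,\theta\psi)$ for all $\phi,\psi,\theta$ (it need not separate points). The support $\operatorname{supp}\phi$ is the closure of $\{x:\phi(x)\neq x\}$. The displacement energy of a subset $A$ is $e(A)=\inf\{\rho(\mathrm{id},f): f\in\mathrm{Ham}(M,\Omega),\ f(A)\cap A=\emptyset\}$, with $\inf\emptyset=+\infty$. *)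

theory Defs
  imports "HOL-Analysis.Analysis"
begin

definition supp :: "('a::topological_space \<Rightarrow> 'a) \<Rightarrow> 'a set" where
  "supp \<phi> = closure {x. \<phi> x \<noteq> x}"

text \<open>H is a group (under composition) of homeomorphisms of the space.
  This is the abstract structure of Ham(M,Omega) used by the statement.\<close>
definition homeo_group :: "('a::topological_space \<Rightarrow> 'a) set \<Rightarrow> bool" where
  "homeo_group H \<longleftrightarrow>
     id \<in> H \<and>
     (\<forall>f\<in>H. \<forall>g\<in>H. f \<circ> g \<in> H) \<and>
     (\<forall>f\<in>H. inv f \<in> H) \<and>
     (\<forall>f\<in>H. bij f \<and> continuous_on UNIV f \<and> continuous_on UNIV (inv f))"

definition bi_invariant_pseudometric ::
    "('a \<Rightarrow> 'a) set \<Rightarrow> (('a \<Rightarrow> 'a) \<Rightarrow> ('a \<Rightarrow> 'a) \<Rightarrow> real) \<Rightarrow> bool" where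
  "bi_invariant_pseudometric H \<rho> \<longleftrightarrow>
     (\<forall>\<phi>\<in>H. \<forall>\<psi>\<in>H. \<rho> \<phi> \<psi> \<ge> 0) \<and>
     (\<forall>\<phi>\<in>H. \<forall>\<psi>\<in>H. \<rho> \<phi> \<psi> = \<rho> \<psi> \<phi>) \<and>
     (\<forall>\<phi>\<in>H. \<rho> \<phi> \<phi> = 0) \<and>
     (\<forall>\<phi>\<in>H. \<forall>\<psi>\<in>H. \<forall>\<xi>\<in>H. \<rho> \<phi> \<xi> \<le> \<rho> \<phi> \<psi> + \<rho> \<psi> \<xi>) \<and>
     (\<forall>\<phi>\<in>H. \<forall>\<psi>\<in>H. \<forall>\<theta>\<in>H.
        \<rho> \<phi> \<psi> = \<rho> (\<phi> \<circ> \<theta>) (\<psi> \<circ> \<theta>) \<and> \<rho> \<phi> \<psi> = \<rho> (\<theta> \<circ> \<phi>) (\<theta> \<circ> \<psi>))"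

text \<open>Displacement energy, valued in the extended reals so that Inf {} = +infinity.\<close>
definition displacement_energy ::
    "('a \<Rightarrow> 'a) set \<Rightarrow> (('a \<Rightarrow> 'a) \<Rightarrow> ('a \<Rightarrow> 'a) \<Rightarrow> real) \<Rightarrow> 'a set \<Rightarrow> ereal" where
  "displacement_energy H \<rho> A = Inf {ereal (\<rho> id f) | f. f \<in> H \<and> f ` A \<inter> A = {}}"

definition commutator :: "('a \<Rightarrow> 'a) \<Rightarrow> ('a \<Rightarrow> 'a) \<Rightarrow> ('a \<Rightarrow> 'a)" where
  "commutator \<phi> \<psi> = inv \<psi> \<circ> inv \<phi> \<circ> \<psi> \<circ> \<phi>"

end

theory Submission
  imports Defs
begin

lemma moved_sub: "supp \<phi> \<subseteq> A \<Longrightarrow> \<phi> x \<noteq> x \<Longrightarrow> x \<in> A"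
proof -
  assume a: "supp \<phi> \<subseteq> A" "\<phi> x \<noteq> x"
  then have "x \<in> {x. \<phi> x \<noteq> x}" by simp
  then have "x \<in> closure {x. \<phi> x \<noteq> x}" by (rule subsetD[OF closure_subset])
  then show "x \<in> A" using a(1) unfolding supp_def by (rule subsetD[rotated])
qed

lemma bij_keep_in:
  assumes "bij g" "\<And>x. x \<notin> A \<Longrightarrow> g x = x" "x \<in> A" shows "g x \<in> A"
proof (rule ccontr)
  assume "g x \<notin> A"
  then have "g (g x) = g x" using assms(2) by blast
  then have "g x = x" using bij_is_inj[OF assms(1)] by (meson injD)
  with \<open>g x \<notin> A\<close> assms(3) show False by simp
qed

lemma bij_keep_out:
  assumes "bij g" "\<And>x. x \<in> A \<Longrightarrow> g x = x" "x \<notin> A" shows "g x \<notin> A"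
proof
  assume "g x \<in> A"
  then have "g (g x) = g x" using assms(2) by blast
  then have "g x = x" using bij_is_inj[OF assms(1)] by (meson injD)
  with \<open>g x \<in> A\<close> assms(3) show False by simp
qed

theorem lemma2p4:
  fixes H :: "('a::topological_space \<Rightarrow> 'a) set"
    and \<rho> :: "('a \<Rightarrow> 'a) \<Rightarrow> ('a \<Rightarrow> 'a) \<Rightarrow> real"
    and A :: "'a set"
  assumes "homeo_group H"
    and "bi_invariant_pseudometric H \<rho>"
    and "open A" and "A \<noteq> {}"
    and "\<phi> \<in> H" and "\<psi> \<in> H"
    and "supp \<phi> \<subseteq> A" and "supp \<psi> \<subseteq> A"
  shows "displacement_energy H \<rho> A \<ge> ereal (\<rho> id (commutator \<phi> \<psi>) / 4)"
  unfolding displacement_energy_def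
proof (rule Inf_greatest, clarify)
  fix f assume fH: "f \<in> H" and disj: "f ` A \<inter> A = {}"
  have idH: "id \<in> H" and comp: "\<And>a b. a \<in> H \<Longrightarrow> b \<in> H \<Longrightarrow> a \<circ> b \<in> H"
    and invH: "\<And>a. a \<in> H \<Longrightarrow> inv a \<in> H" and bijH: "\<And>a. a \<in> H \<Longrightarrow> bij a"
    using assms(1) unfolding homeo_group_def by auto
  have D: "(\<forall>\<phi>\<in>H. \<forall>\<psi>\<in>H. \<rho> \<phi> \<psi> \<ge> 0) \<and>
     (\<forall>\<phi>\<in>H. \<forall>\<psi>\<in>H. \<rho> \<phi> \<psi> = \<rho> \<psi> \<phi>) \<and>
     (\<forall>\<phi>\<in>H. \<rho> \<phi> \<phi> = 0) \<and>
     (\<forall>\<phi>\<in>H. \<forall>\<psi>\<in>H. \<forall>\<xi>\<in>H. \<rho> \<phi> \<xi> \<le> \<rho> \<phi> \<psi> + \<rho> \<psi> \<xi>) \<and>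
     (\<forall>\<phi>\<in>H. \<forall>\<psi>\<in>H. \<forall>\<theta>\<in>H.
        \<rho> \<phi> \<psi> = \<rho> (\<phi> \<circ> \<theta>) (\<psi> \<circ> \<theta>) \<and> \<rho> \<phi> \<psi> = \<rho> (\<theta> \<circ> \<phi>) (\<theta> \<circ> \<psi>))"
    using assms(2) unfolding bi_invariant_pseudometric_def .
  have sym: "\<And>a b. a \<in> H \<Longrightarrow> b \<in> H \<Longrightarrow> \<rho> a b = \<rho> b a" using D by blast
  have tri: "\<And>a b c. a \<in> H \<Longrightarrow> b \<in> H \<Longrightarrow> c \<in> H \<Longrightarrow> \<rho> a c \<le> \<rho> a b + \<rho> b c" using D by blast
  have rinv: "\<And>a b c. a \<in> H \<Longrightarrow> b \<in> H \<Longrightarrow> c \<in> H \<Longrightarrow> \<rho> a b = \<rho> (a \<circ> c) (b \<circ> c)" using D by blast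
  have linv: "\<And>a b c. a \<in> H \<Longrightarrow> b \<in> H \<Longrightarrow> c \<in> H \<Longrightarrow> \<rho> a b = \<rho> (c \<circ> a) (c \<circ> b)" using D by blast
  have ri: "a \<circ> inv a = id" if "a \<in> H" for a
    using surj_iff[of a] bij_is_surj[OF bijH[OF that]] by simp
  have fi: "f (inv f y) = y" for y using surj_f_inv_f[OF bij_is_surj[OF bijH[OF fH]]] .
  define g where "g = f \<circ> \<phi> \<circ> inv f"
  have gH: "g \<in> H" unfolding g_def using comp invH fH assms(5) by blast
  have gA: "g y = y" if "y \<in> A" for y
  proof -
    have "inv f y \<notin> A"
    proof
      assume "inv f y \<in> A"
      then have "f (inv f y) \<in> f ` A" by blast
      moreover have "f (inv f y) = y" using fi by simp
      ultimately have "y \<in> f ` A \<inter> A" using that by simp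
      then show False using disj by simp
    qed
    then have "\<phi> (inv f y) = inv f y" using moved_sub[OF assms(7), of "inv f y"] by argo
    then show ?thesis unfolding g_def using fi by simp
  qed
  have psiout: "\<And>x. x \<notin> A \<Longrightarrow> \<psi> x = x" using moved_sub[OF assms(8)] by (metis (mono_tags))
  have commute: "g \<circ> \<psi> = \<psi> \<circ> g"
  proof
    fix x show "(g \<circ> \<psi>) x = (\<psi> \<circ> g) x"
    proof (cases "x \<in> A")
      case True
      then have "\<psi> x \<in> A" using bij_keep_in[OF bijH[OF assms(6)] psiout] by blast
      then show ?thesis using gA True by simp
    next
      case False
      then have "g x \<notin> A" using bij_keep_out[OF bijH[OF gH] gA] by blast
      then show ?thesis using psiout False by simp
    qed
  qed
  have pf: "\<rho> \<phi> (f \<circ> \<phi>) = \<rho> id f"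
    using rinv[OF idH fH assms(5)] by simp
  have fg: "\<rho> (f \<circ> \<phi>) g = \<rho> id f"
  proof -
    have "\<rho> (f \<circ> \<phi>) g = \<rho> ((f \<circ> \<phi>) \<circ> id) ((f \<circ> \<phi>) \<circ> inv f)" unfolding g_def by (simp add: o_assoc)
    also have "\<dots> = \<rho> id (inv f)" using linv[OF idH invH[OF fH] comp[OF fH assms(5)]] by simp
    also have "\<dots> = \<rho> (f \<circ> id) (f \<circ> inv f)" using linv[OF idH invH[OF fH] fH] .
    also have "\<dots> = \<rho> id f" using ri[OF fH] sym[OF fH idH] by simp
    finally show ?thesis .
  qed
  have phig: "\<rho> \<phi> g \<le> 2 * \<rho> id f"
    using tri[OF assms(5) comp[OF fH assms(5)] gH] pf fg by simp
  have c1: "\<rho> id (commutator \<phi> \<psi>) = \<rho> (\<phi> \<circ> \<psi>) (\<psi> \<circ> \<phi>)"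
  proof -
    have cH: "commutator \<phi> \<psi> \<in> H" unfolding commutator_def
      by (rule comp[OF comp[OF comp[OF invH[OF assms(6)] invH[OF assms(5)]] assms(6)] assms(5)])
    have e1: "\<rho> id (commutator \<phi> \<psi>) = \<rho> ((\<phi> \<circ> \<psi>) \<circ> id) ((\<phi> \<circ> \<psi>) \<circ> commutator \<phi> \<psi>)"
      using linv[OF idH cH comp[OF assms(5,6)]] .
    have e2: "(\<phi> \<circ> \<psi>) \<circ> commutator \<phi> \<psi> = \<psi> \<circ> \<phi>"
    proof -
      have "(\<phi> \<circ> \<psi>) \<circ> commutator \<phi> \<psi> = \<phi> \<circ> (\<psi> \<circ> inv \<psi>) \<circ> inv \<phi> \<circ> \<psi> \<circ> \<phi>"
        unfolding commutator_def by (simp add: o_assoc)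
      also have "\<dots> = (\<phi> \<circ> inv \<phi>) \<circ> \<psi> \<circ> \<phi>" using ri[OF assms(6)] by (simp add: o_assoc)
      also have "\<dots> = \<psi> \<circ> \<phi>" using ri[OF assms(5)] by simp
      finally show ?thesis .
    qed
    show ?thesis using e1 e2 by simp
  qed
  have s1: "\<rho> (\<phi> \<circ> \<psi>) (g \<circ> \<psi>) = \<rho> \<phi> g" using rinv[OF assms(5) gH assms(6)] by simp
  have s3: "\<rho> (\<psi> \<circ> g) (\<psi> \<circ> \<phi>) = \<rho> g \<phi>" using linv[OF gH assms(5,6)] by simp
  have "\<rho> (\<phi> \<circ> \<psi>) (\<psi> \<circ> \<phi>) \<le> \<rho> (\<phi> \<circ> \<psi>) (g \<circ> \<psi>) + \<rho> (g \<circ> \<psi>) (\<psi> \<circ> \<phi>)"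
    using tri[OF comp[OF assms(5,6)] comp[OF gH assms(6)] comp[OF assms(6,5)]] .
  also have "\<rho> (g \<circ> \<psi>) (\<psi> \<circ> \<phi>) = \<rho> (\<psi> \<circ> g) (\<psi> \<circ> \<phi>)" using commute by simp
  finally have "\<rho> id (commutator \<phi> \<psi>) \<le> 4 * \<rho> id f"
    using c1 s1 s3 phig sym[OF gH assms(5)] by linarith
  then show "ereal (\<rho> id (commutator \<phi> \<psi>) / 4) \<le> ereal (\<rho> id f)"
    unfolding ereal_less_eq(3) by linarith
qed

end
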